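(* Let $K$ be a field of characteristic zero. Let $NAP$ be the binary quadratic operad generated by one binary operation $\prec$ (with no symmetry) subject to the relation $(x\prec y)\prec z=(x\prec z)\prec y$, and let $Moor$ be the binary quadratic operad generated by one binary operation $\prec$ subject to the relations $(x\prec y)\prec z-(x\prec z)\prec y=0$ and $x\prec(y\prec z)=0$. Then: \begin{enumerate} \item The Koszul dual operad (in the sense of Ginzburg–Kapranov) of $NAP$ is $Moor$. \item For any $K$-vector space $V$, the free $Moor$-algebra over $V$ is the vector space $V\otimes S(V)$ with the bilinear operation determined by $(v\otimes\omega)\prec(v'\otimes 1)=v\otimes(\omega\vee v')$ and $(v\otimes\omega)\prec(v'\otimes\omega')=0$ whenever $\omega'\in S^n(V)$ with $n\geq 1$ (for $v,v'\in V$, $\omega\in S(V)$), together with the embedding $i:V\to V\otimes S(V)$, $i(v)=v\otimes 1$. That is, for every $Moor$-algebra $(A,\prec_A)$ and every linear map $f:V\to A$ there is a unique morphism of $Moor$-algebras $\tilde f:V\otimes S(V)\to A$ with $\tilde f\circ i=f$. \item $\dim Moor(n)=n$ for all $n\geq 1$, i.e. the generating series of $Moor$ is $f_{Moor}(x)=\sum_{n>0}\dim Moor(n)\frac{x^n}{n!}=xe^{x}$. \end{enumerate}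
   Context: $S(V)=K\oplus\bigoplus_{n>0}S^n(V)$ is the symmetric algebra of $V$, where $S^n(V)$ is the quotient of $V^{\otimes n}$ by the action of $\Sigma_n$; its elements are written $v_1\vee\cdots\vee v_n$, and $1\in K=S^0(V)$. A $Moor$-algebra is a $K$-vector space with a bilinear operation $\prec$ satisfying $(x\prec y)\prec z=(x\prec z)\prec y$ and $x\prec(y\prec z)=0$ for all $x,y,z$; a morphism of $Moor$-algebras is a linear map preserving $\prec$. $Moor(n)$ denotes the space of $n$-ary operations of the operad $Moor$. *)

theory Defs
  imports Main "HOL-Library.Poly_Mapping" "HOL-Library.Multiset"
    "HOL-Computational_Algebra.Formal_Power_Series"
begin

definition fscale :: "'k::field \<Rightarrow> ('g \<Rightarrow>\<^sub>0 'k) \<Rightarrow> ('g \<Rightarrow>\<^sub>0 'k)" where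
  "fscale c p = Poly_Mapping.map (\<lambda>x. c * x) p"

definition moor_algebra :: "('k::field \<Rightarrow> 'a::ab_group_add \<Rightarrow> 'a) \<Rightarrow> ('a \<Rightarrow> 'a \<Rightarrow> 'a) \<Rightarrow> bool" where
  "moor_algebra scaleA pr \<longleftrightarrow>
     vector_space scaleA \<and>
     (\<forall>x. Vector_Spaces.linear scaleA scaleA (pr x)) \<and>
     (\<forall>y. Vector_Spaces.linear scaleA scaleA (\<lambda>x. pr x y)) \<and>
     (\<forall>x y z. pr (pr x y) z = pr (pr x z) y) \<and>
     (\<forall>x y z. pr x (pr y z) = 0)"

text \<open>V \<otimes> S(V) = (direct sum over n of) V \<otimes> S^n(V) is presented as the quotient of the free
  vector space on generators (v, M), v \<in> V, M a finite multiset of vectors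
  (the generator (v, {#v1,...,vn#}) stands for v \<otimes> (v1 \<or> ... \<or> vn); the empty multiset is 1),
  by the subspace tsN of multilinearity relations.  The symmetric-group coinvariants defining
  S^n(V) are built in by using multisets.\<close>

definition tsN :: "('k::field \<Rightarrow> 'v::ab_group_add \<Rightarrow> 'v) \<Rightarrow> (('v \<times> 'v multiset) \<Rightarrow>\<^sub>0 'k) set" where
  "tsN scaleV = module.span fscale
     ({Poly_Mapping.single (scaleV a u + scaleV b w, M) 1
        - Poly_Mapping.single (u, M) a - Poly_Mapping.single (w, M) b | a b u w M. True}
      \<union> {Poly_Mapping.single (v, add_mset (scaleV a u + scaleV b w) M) 1
        - Poly_Mapping.single (v, add_mset u M) a - Poly_Mapping.single (v, add_mset w M) b
        | a b u w v M. True})"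

text \<open>Bilinear extension of (v\<otimes>\<omega>) prec (v'\<otimes>1) = v\<otimes>(\<omega>\<or>v'),
  (v\<otimes>\<omega>) prec (v'\<otimes>\<omega>') = 0 for \<omega>' of positive degree, on the free vector space.\<close>
definition tsprec :: "(('v \<times> 'v multiset) \<Rightarrow>\<^sub>0 'k::field) \<Rightarrow> (('v \<times> 'v multiset) \<Rightarrow>\<^sub>0 'k)
     \<Rightarrow> (('v \<times> 'v multiset) \<Rightarrow>\<^sub>0 'k)" where
  "tsprec p q = (\<Sum>x\<in>Poly_Mapping.keys p. \<Sum>y\<in>Poly_Mapping.keys q.
      (if snd y = {#} then Poly_Mapping.single (fst x, add_mset (fst y) (snd x))
                              (Poly_Mapping.lookup p x * Poly_Mapping.lookup q y)
       else 0))"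

definition tsi :: "'v \<Rightarrow> (('v \<times> 'v multiset) \<Rightarrow>\<^sub>0 'k::field)" where
  "tsi v = Poly_Mapping.single (v, {#}) 1"

text \<open>Universal property of the quotient (V\<otimes>S(V), prec) = (free space / tsN, tsprec),
  unpacked: tsN is a two-sided ideal for tsprec, the Moor identities hold modulo tsN
  (so the quotient is a Moor algebra), and Moor-algebra morphisms out of the quotient
  (= linear multiplicative maps on the free space vanishing on tsN) extending a linear f
  exist uniquely.\<close>
definition is_free_moor_tensor_sym :: "('k::field \<Rightarrow> 'v::ab_group_add \<Rightarrow> 'v) \<Rightarrow> bool" where
  "is_free_moor_tensor_sym scaleV \<longleftrightarrow>
     (\<forall>p q. q \<in> tsN scaleV \<longrightarrow> tsprec p q \<in> tsN scaleV \<and> tsprec q p \<in> tsN scaleV) \<and>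
     (\<forall>p q r. tsprec (tsprec p q) r - tsprec (tsprec p r) q \<in> tsN scaleV) \<and>
     (\<forall>p q r. tsprec p (tsprec q r) \<in> tsN scaleV)"

definition moor_morphism_from_ts ::
  "('k::field \<Rightarrow> 'v::ab_group_add \<Rightarrow> 'v) \<Rightarrow> ('k \<Rightarrow> 'a::ab_group_add \<Rightarrow> 'a) \<Rightarrow> ('a \<Rightarrow> 'a \<Rightarrow> 'a)
     \<Rightarrow> ((('v \<times> 'v multiset) \<Rightarrow>\<^sub>0 'k) \<Rightarrow> 'a) \<Rightarrow> bool" where
  "moor_morphism_from_ts scaleV scaleA pr G \<longleftrightarrow>
     Vector_Spaces.linear fscale scaleA G \<and>
     (\<forall>p\<in>tsN scaleV. G p = 0) \<and>
     (\<forall>p q. G (tsprec p q) = pr (G p) (G q))"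

text \<open>Nonassociative monomials: Node a b stands for a prec b; Leaf i is the variable x_i.
  Leaf 0 is reserved as the hole of a context.\<close>
datatype tree = Leaf nat | Node tree tree

fun leaves :: "tree \<Rightarrow> nat list" where
  "leaves (Leaf i) = [i]"
| "leaves (Node a b) = leaves a @ leaves b"

text \<open>Multilinear monomials in x_1,...,x_n: a basis of the free operad F(E)(n).\<close>
definition multilin :: "nat \<Rightarrow> tree set" where
  "multilin n = {t. distinct (leaves t) \<and> set (leaves t) = {1..n}}"

definition freeop :: "nat \<Rightarrow> (tree \<Rightarrow>\<^sub>0 'k::field) set" where
  "freeop n = {p. Poly_Mapping.keys p \<subseteq> multilin n}"

fun subst3 :: "tree \<Rightarrow> tree \<Rightarrow> tree \<Rightarrow> tree \<Rightarrow> tree" where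
  "subst3 (Leaf i) a b c = (if i = 1 then a else if i = 2 then b else if i = 3 then c else Leaf i)"
| "subst3 (Node s t) a b c = Node (subst3 s a b c) (subst3 t a b c)"

fun plug :: "tree \<Rightarrow> tree \<Rightarrow> tree" where
  "plug (Leaf i) t = (if i = 0 then t else Leaf i)"
| "plug (Node l r) t = Node (plug l t) (plug r t)"

definition lin_map :: "(tree \<Rightarrow> tree) \<Rightarrow> (tree \<Rightarrow>\<^sub>0 'k::field) \<Rightarrow> (tree \<Rightarrow>\<^sub>0 'k)" where
  "lin_map h p = (\<Sum>t\<in>Poly_Mapping.keys p. Poly_Mapping.single (h t) (Poly_Mapping.lookup p t))"

text \<open>The operadic ideal (R)(n) generated by a space of relations R \<subseteq> F(E)(3):
  spanned by all C[r(a,b,c)] with C a one-hole context, r \<in> R, a,b,c monomials,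
  the result being multilinear of arity n.\<close>
definition op_ideal :: "(tree \<Rightarrow>\<^sub>0 'k::field) set \<Rightarrow> nat \<Rightarrow> (tree \<Rightarrow>\<^sub>0 'k) set" where
  "op_ideal R n = module.span fscale
     {lin_map (plug C) (lin_map (\<lambda>t. subst3 t a b c) r) | C r a b c.
        r \<in> R \<and> count (mset (leaves C)) 0 = 1 \<and> plug C (Node (Node a b) c) \<in> multilin n}"

definition op_dim :: "(tree \<Rightarrow>\<^sub>0 'k::field) set \<Rightarrow> nat \<Rightarrow> nat" where
  "op_dim R n = vector_space.dim (fscale :: 'k \<Rightarrow> _) (freeop n)
               - vector_space.dim (fscale :: 'k \<Rightarrow> _) (op_ideal R n)"

abbreviation L where "L \<equiv> Leaf"
abbreviation Nd where "Nd \<equiv> Node"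

definition is_perm3 :: "nat \<Rightarrow> nat \<Rightarrow> nat \<Rightarrow> bool" where
  "is_perm3 i j k \<longleftrightarrow> distinct [i, j, k] \<and> set [i, j, k] = {1, 2, 3}"

definition rel_nap :: "nat \<Rightarrow> nat \<Rightarrow> nat \<Rightarrow> (tree \<Rightarrow>\<^sub>0 'k::field)" where
  "rel_nap i j k = Poly_Mapping.single (Nd (Nd (L i) (L j)) (L k)) 1
                 - Poly_Mapping.single (Nd (Nd (L i) (L k)) (L j)) 1"

definition rel_right :: "nat \<Rightarrow> nat \<Rightarrow> nat \<Rightarrow> (tree \<Rightarrow>\<^sub>0 'k::field)" where
  "rel_right i j k = Poly_Mapping.single (Nd (L i) (Nd (L j) (L k))) 1"

definition R_NAP :: "(tree \<Rightarrow>\<^sub>0 'k::field) set" where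
  "R_NAP = module.span fscale {rel_nap i j k | i j k. is_perm3 i j k}"

definition R_Moor :: "(tree \<Rightarrow>\<^sub>0 'k::field) set" where
  "R_Moor = module.span fscale
     ({rel_nap i j k | i j k. is_perm3 i j k} \<union> {rel_right i j k | i j k. is_perm3 i j k})"

text \<open>Ginzburg-Kapranov pairing on F(E)(3) x F(E^v)(3), with E^v identified with E
  (convention of Loday-Vallette): <(x_i x_j) x_k, (x_i x_j) x_k> = sgn(ijk),
  <x_i (x_j x_k), x_i (x_j x_k)> = - sgn(ijk), all other pairings of basis monomials 0.\<close>
definition sgn3 :: "nat \<Rightarrow> nat \<Rightarrow> nat \<Rightarrow> 'k::field" where
  "sgn3 i j k = (if (i, j, k) \<in> {(1, 2, 3), (2, 3, 1), (3, 1, 2)} then 1 else - 1)"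

fun gk_weight :: "tree \<Rightarrow> 'k::field" where
  "gk_weight (Node (Node (Leaf i) (Leaf j)) (Leaf k)) = sgn3 i j k"
| "gk_weight (Node (Leaf i) (Node (Leaf j) (Leaf k))) = - sgn3 i j k"
| "gk_weight _ = 0"

definition gk_pair :: "(tree \<Rightarrow>\<^sub>0 'k::field) \<Rightarrow> (tree \<Rightarrow>\<^sub>0 'k) \<Rightarrow> 'k" where
  "gk_pair p q = (\<Sum>t\<in>multilin 3. gk_weight t * Poly_Mapping.lookup p t * Poly_Mapping.lookup q t)"

text \<open>The relation space R^\<bottom> \<subseteq> F(E^v)(3) of the Koszul dual operad P(E,R)^! = P(E^v, R^\<bottom>).\<close>
definition koszul_dual_rel :: "(tree \<Rightarrow>\<^sub>0 'k::field) set \<Rightarrow> (tree \<Rightarrow>\<^sub>0 'k) set" where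
  "koszul_dual_rel R = {q \<in> freeop 3. \<forall>p\<in>R. gk_pair p q = 0}"

end

theory Submission
  imports Defs
begin


lemma lookup_fscale [simp]: "Poly_Mapping.lookup (fscale c p) k = c * Poly_Mapping.lookup p k"
  unfolding fscale_def by (simp add: Poly_Mapping.map.rep_eq when_def)

interpretation fs: vector_space "fscale :: 'k::field \<Rightarrow> ('g \<Rightarrow>\<^sub>0 'k) \<Rightarrow> _"
  by unfold_locales (auto intro!: poly_mapping_eqI simp: lookup_add algebra_simps)

lemma fscale_single [simp]: "fscale c (Poly_Mapping.single k a) = Poly_Mapping.single k (c * a)"
  by (rule poly_mapping_eqI) (simp add: lookup_single when_def)

lemma pm_expand_superset:
  assumes "finite S" "Poly_Mapping.keys p \<subseteq> S"
  shows "p = (\<Sum>x\<in>S. Poly_Mapping.single x (Poly_Mapping.lookup p x))"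
proof (rule poly_mapping_eqI)
  fix k
  have "Poly_Mapping.lookup (\<Sum>x\<in>S. Poly_Mapping.single x (Poly_Mapping.lookup p x)) k
      = (\<Sum>x\<in>S. (Poly_Mapping.lookup p x when x = k))"
    by (simp add: lookup_sum lookup_single)
  also have "\<dots> = Poly_Mapping.lookup p k"
  proof (cases "k \<in> S")
    case True
    then show ?thesis using assms(1) by (simp add: when_def sum.delta' )
  next
    case False
    then have "Poly_Mapping.lookup p k = 0" using assms(2) by (auto simp: in_keys_iff)
    then show ?thesis using False by (auto simp: when_def intro!: sum.neutral)
  qed
  finally show "Poly_Mapping.lookup p k = Poly_Mapping.lookup (\<Sum>x\<in>S. Poly_Mapping.single x (Poly_Mapping.lookup p x)) k" ..
qed

lemma pm_expand: "p = (\<Sum>x\<in>Poly_Mapping.keys p. Poly_Mapping.single x (Poly_Mapping.lookup p x))"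
  by (rule pm_expand_superset) auto

lemma fs_single_in_span: "Poly_Mapping.single x 1 \<in> S \<Longrightarrow> Poly_Mapping.single x c \<in> fs.span S"
  using fs.span_scale[OF fs.span_base, of "Poly_Mapping.single x 1" S c] by simp




definition tsh :: "(('v \<times> 'v multiset) \<Rightarrow>\<^sub>0 'k::field) \<Rightarrow> (('v \<times> 'v multiset) \<Rightarrow>\<^sub>0 'k) \<Rightarrow> ('v \<times> 'v multiset) \<Rightarrow> ('v \<times> 'v multiset) \<Rightarrow> (('v \<times> 'v multiset) \<Rightarrow>\<^sub>0 'k)" where
  "tsh p q x y = (if snd y = {#} then Poly_Mapping.single (fst x, add_mset (fst y) (snd x))
                              (Poly_Mapping.lookup p x * Poly_Mapping.lookup q y) else 0)"

lemma tsprec_eq: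
  assumes "finite A" "Poly_Mapping.keys p \<subseteq> A" "finite B" "Poly_Mapping.keys q \<subseteq> B"
  shows "tsprec p q = (\<Sum>x\<in>A. \<Sum>y\<in>B. tsh p q x y)"
proof -
  have "tsprec p q = (\<Sum>x\<in>Poly_Mapping.keys p. \<Sum>y\<in>Poly_Mapping.keys q. tsh p q x y)"
    unfolding tsprec_def tsh_def ..
  also have "\<dots> = (\<Sum>x\<in>Poly_Mapping.keys p. \<Sum>y\<in>B. tsh p q x y)"
    by (intro sum.cong refl sum.mono_neutral_left assms) (auto simp: tsh_def in_keys_iff)
  also have "\<dots> = (\<Sum>x\<in>A. \<Sum>y\<in>B. tsh p q x y)"
    by (intro sum.mono_neutral_left assms) (auto simp: tsh_def in_keys_iff intro!: sum.neutral)
  finally show ?thesis .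
qed

lemma tsprec_add_left: "tsprec (p1 + p2) q = tsprec p1 q + tsprec p2 q"
proof -
  let ?A = "Poly_Mapping.keys p1 \<union> Poly_Mapping.keys p2" and ?B = "Poly_Mapping.keys q"
  have k: "Poly_Mapping.keys (p1 + p2) \<subseteq> ?A" by (rule keys_add)
  have "tsprec (p1 + p2) q = (\<Sum>x\<in>?A. \<Sum>y\<in>?B. tsh (p1+p2) q x y)"
    using k by (intro tsprec_eq) auto
  also have "\<dots> = (\<Sum>x\<in>?A. \<Sum>y\<in>?B. tsh p1 q x y + tsh p2 q x y)"
    by (intro sum.cong refl) (simp add: tsh_def lookup_add distrib_right single_add)
  also have "\<dots> = tsprec p1 q + tsprec p2 q"
    by (simp add: sum.distrib tsprec_eq[of ?A _ ?B])
  finally show ?thesis .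
qed

lemma tsprec_add_right: "tsprec p (q1 + q2) = tsprec p q1 + tsprec p q2"
proof -
  let ?B = "Poly_Mapping.keys q1 \<union> Poly_Mapping.keys q2" and ?A = "Poly_Mapping.keys p"
  have k: "Poly_Mapping.keys (q1 + q2) \<subseteq> ?B" by (rule keys_add)
  have "tsprec p (q1 + q2) = (\<Sum>x\<in>?A. \<Sum>y\<in>?B. tsh p (q1+q2) x y)"
    using k by (intro tsprec_eq) auto
  also have "\<dots> = (\<Sum>x\<in>?A. \<Sum>y\<in>?B. tsh p q1 x y + tsh p q2 x y)"
    by (intro sum.cong refl) (simp add: tsh_def lookup_add distrib_left single_add)
  also have "\<dots> = tsprec p q1 + tsprec p q2"
    by (simp add: sum.distrib tsprec_eq[of ?A _ ?B])
  finally show ?thesis .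
qed

lemma tsprec_scale_left: "tsprec (fscale c p) q = fscale c (tsprec p q)"
proof -
  let ?A = "Poly_Mapping.keys p" and ?B = "Poly_Mapping.keys q"
  have k: "Poly_Mapping.keys (fscale c p) \<subseteq> ?A" by (auto simp: in_keys_iff)
  have "tsprec (fscale c p) q = (\<Sum>x\<in>?A. \<Sum>y\<in>?B. tsh (fscale c p) q x y)"
    using k by (intro tsprec_eq) auto
  also have "\<dots> = (\<Sum>x\<in>?A. \<Sum>y\<in>?B. fscale c (tsh p q x y))"
    by (intro sum.cong refl) (simp add: tsh_def mult.assoc)
  also have "\<dots> = fscale c (tsprec p q)"
    by (simp add: fs.scale_sum_right tsprec_eq[of ?A _ ?B])
  finally show ?thesis .
qed

lemma tsprec_scale_right: "tsprec p (fscale c q) = fscale c (tsprec p q)"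
proof -
  let ?A = "Poly_Mapping.keys p" and ?B = "Poly_Mapping.keys q"
  have k: "Poly_Mapping.keys (fscale c q) \<subseteq> ?B" by (auto simp: in_keys_iff)
  have "tsprec p (fscale c q) = (\<Sum>x\<in>?A. \<Sum>y\<in>?B. tsh p (fscale c q) x y)"
    using k by (intro tsprec_eq) auto
  also have "\<dots> = (\<Sum>x\<in>?A. \<Sum>y\<in>?B. fscale c (tsh p q x y))"
    by (intro sum.cong refl) (simp add: tsh_def mult.left_commute)
  also have "\<dots> = fscale c (tsprec p q)"
    by (simp add: fs.scale_sum_right tsprec_eq[of ?A _ ?B])
  finally show ?thesis .
qed

lemma tsprec_single:
  "tsprec (Poly_Mapping.single x a) (Poly_Mapping.single y b) =
    (if snd y = {#} then Poly_Mapping.single (fst x, add_mset (fst y) (snd x)) (a * b) else 0)"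
  by (subst tsprec_eq[of "{x}" _ "{y}"]) (auto simp: tsh_def)

lemma tsprec_zero_left [simp]: "tsprec 0 q = 0"
  by (simp add: tsprec_def)

lemma tsprec_zero_right [simp]: "tsprec p 0 = 0"
  by (simp add: tsprec_def)

lemma tsprec_diff_left: "tsprec (p1 - p2) q = tsprec p1 q - tsprec p2 q"
  by (metis add_diff_cancel diff_add_cancel tsprec_add_left)

lemma tsprec_diff_right: "tsprec p (q1 - q2) = tsprec p q1 - tsprec p q2"
  by (metis add_diff_cancel diff_add_cancel tsprec_add_right)

lemma pm_induct [case_names single add]:
  fixes p :: "'a \<Rightarrow>\<^sub>0 'b::comm_monoid_add"
  assumes "\<And>x a. P (Poly_Mapping.single x a)" "\<And>p q. P p \<Longrightarrow> P q \<Longrightarrow> P (p + q)"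
  shows "P p"
proof -
  have "P (\<Sum>x\<in>A. Poly_Mapping.single x (Poly_Mapping.lookup p x))" if "finite A" for A
    using that
  proof (induction A rule: finite_induct)
    case empty then show ?case using assms(1)[of undefined 0] by simp
  next
    case (insert x F) then show ?case using assms by simp
  qed
  then show ?thesis by (subst pm_expand) simp
qed

lemma tsprec_right_comm: "tsprec (tsprec p q) r = tsprec (tsprec p r) q"
proof (induction p rule: pm_induct)
  case (single x a)
  then show ?case
  proof (induction q rule: pm_induct)
    case (single y b)
    then show ?case
    proof (induction r rule: pm_induct)
      case (single z c)
      then show ?case by (simp add: tsprec_single add_mset_commute mult_ac)
    qed (simp add: tsprec_add_left tsprec_add_right)
  qed (simp add: tsprec_add_left tsprec_add_right)
qed (simp add: tsprec_add_left tsprec_add_right)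

lemma tsprec_keys: "Poly_Mapping.keys (tsprec p q) \<subseteq> {y. snd y \<noteq> {#}}"
  unfolding tsprec_def
  by (rule order.trans[OF keys_sum]) (auto dest!: set_mp[OF keys_sum] split: if_splits)

lemma tsprec_nonempty_right:
  assumes "Poly_Mapping.keys q \<subseteq> {y. snd y \<noteq> {#}}"
  shows "tsprec p q = 0"
  unfolding tsprec_def using assms by (auto intro!: sum.neutral)

lemma tsprec_right_zero: "tsprec p (tsprec q r) = 0"
  by (rule tsprec_nonempty_right[OF tsprec_keys])




lemma tsN_G1:
  "fscale c (Poly_Mapping.single (scaleV a u + scaleV b w, M) 1 - Poly_Mapping.single (u, M) a
     - Poly_Mapping.single (w, M) b) \<in> tsN scaleV"
  unfolding tsN_def by (rule fs.span_scale, rule fs.span_base) blast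

lemma tsN_G2:
  "fscale c (Poly_Mapping.single (v, add_mset (scaleV a u + scaleV b w) M) 1
     - Poly_Mapping.single (v, add_mset u M) a - Poly_Mapping.single (v, add_mset w M) b) \<in> tsN scaleV"
  unfolding tsN_def by (rule fs.span_scale, rule fs.span_base) blast

definition tsgens :: "('k::field \<Rightarrow> 'v::ab_group_add \<Rightarrow> 'v) \<Rightarrow> (('v \<times> 'v multiset) \<Rightarrow>\<^sub>0 'k) set" where
 "tsgens scaleV = {Poly_Mapping.single (scaleV a u + scaleV b w, M) 1
        - Poly_Mapping.single (u, M) a - Poly_Mapping.single (w, M) b | a b u w M. True}
      \<union> {Poly_Mapping.single (v, add_mset (scaleV a u + scaleV b w) M) 1
        - Poly_Mapping.single (v, add_mset u M) a - Poly_Mapping.single (v, add_mset w M) b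
        | a b u w v M. True}"

lemma tsN_tsgens: "tsN scaleV = fs.span (tsgens scaleV)"
  unfolding tsN_def tsgens_def ..

lemma tsN_zero: "0 \<in> tsN scaleV"
  by (simp add: tsN_tsgens fs.span_zero)

lemma tsN_gens:
  assumes "g \<in> tsgens scaleV"
  shows "tsprec (Poly_Mapping.single x c) g \<in> tsN scaleV \<and> tsprec g (Poly_Mapping.single x c) \<in> tsN scaleV"
  using assms unfolding tsgens_def
proof (elim UnE CollectE exE conjE)
  fix a b u w M assume g: "g = Poly_Mapping.single (scaleV a u + scaleV b w, M) 1
        - Poly_Mapping.single (u, M) a - Poly_Mapping.single (w, M) b"
  have 1: "tsprec (Poly_Mapping.single x c) g \<in> tsN scaleV"
  proof (cases "M = {#}")
    case True
    have "tsprec (Poly_Mapping.single x c) g = fscale c (Poly_Mapping.single (fst x, add_mset (scaleV a u + scaleV b w) (snd x)) 1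
     - Poly_Mapping.single (fst x, add_mset u (snd x)) a - Poly_Mapping.single (fst x, add_mset w (snd x)) b)"
      using True by (simp add: g tsprec_diff_right tsprec_single fs.scale_right_diff_distrib)
    then show ?thesis using tsN_G2 by metis
  next
    case False
    then show ?thesis by (simp add: g tsprec_diff_right tsprec_single fs.span_zero tsN_def)
  qed
  have 2: "tsprec g (Poly_Mapping.single x c) \<in> tsN scaleV"
  proof (cases "snd x = {#}")
    case True
    have "tsprec g (Poly_Mapping.single x c) = fscale c (Poly_Mapping.single (scaleV a u + scaleV b w, add_mset (fst x) M) 1
     - Poly_Mapping.single (u, add_mset (fst x) M) a - Poly_Mapping.single (w, add_mset (fst x) M) b)"
      using True by (simp add: g tsprec_diff_left tsprec_single fs.scale_right_diff_distrib mult.commute)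
    then show ?thesis using tsN_G1 by metis
  next
    case False
    then show ?thesis by (simp add: g tsprec_diff_left tsprec_single fs.span_zero tsN_def)
  qed
  from 1 2 show ?thesis ..
next
  fix a b u w v M assume g: "g = Poly_Mapping.single (v, add_mset (scaleV a u + scaleV b w) M) 1
        - Poly_Mapping.single (v, add_mset u M) a - Poly_Mapping.single (v, add_mset w M) b"
  have 1: "tsprec (Poly_Mapping.single x c) g \<in> tsN scaleV"
    by (simp add: g tsprec_diff_right tsprec_single fs.span_zero tsN_def)
  have 2: "tsprec g (Poly_Mapping.single x c) \<in> tsN scaleV"
  proof (cases "snd x = {#}")
    case True
    have "tsprec g (Poly_Mapping.single x c) = fscale c (Poly_Mapping.single (v, add_mset (scaleV a u + scaleV b w) (add_mset (fst x) M)) 1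
     - Poly_Mapping.single (v, add_mset u (add_mset (fst x) M)) a - Poly_Mapping.single (v, add_mset w (add_mset (fst x) M)) b)"
      using True by (simp add: g tsprec_diff_left tsprec_single fs.scale_right_diff_distrib mult.commute add_mset_commute)
    then show ?thesis using tsN_G2 by metis
  next
    case False
    then show ?thesis by (simp add: g tsprec_diff_left tsprec_single fs.span_zero tsN_def)
  qed
  from 1 2 show ?thesis ..
qed

lemma tsN_ideal:
  assumes "q \<in> tsN scaleV"
  shows "tsprec p q \<in> tsN scaleV \<and> tsprec q p \<in> tsN scaleV"
proof -
  have span: "tsN scaleV = fs.span (tsN scaleV)" unfolding tsN_tsgens by (simp add: fs.span_span)
  have gen: "tsprec p g \<in> tsN scaleV \<and> tsprec g p \<in> tsN scaleV" if g: "g \<in> tsgens scaleV" for g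
  proof (induction p rule: pm_induct)
    case (single x a)
    then show ?case using tsN_gens[OF g] by blast
  next
    case (add p q)
    then show ?case unfolding tsprec_add_left tsprec_add_right
      by (metis fs.span_add span)
  qed
  from assms[unfolded tsN_tsgens] show ?thesis
  proof (induction q rule: fs.span_induct_alt)
    case base
    then show ?case by (simp add: tsN_zero)
  next
    case (step c x y)
    then show ?case
      using gen[OF step(1)]
      unfolding tsprec_add_left tsprec_add_right tsprec_scale_left tsprec_scale_right
      by (metis fs.span_add fs.span_scale span)
  qed
qed

lemma free_moor_ts: "is_free_moor_tensor_sym scaleV"
  unfolding is_free_moor_tensor_sym_def
proof (intro conjI allI impI)
  fix p q assume "q \<in> tsN scaleV"
  then show "tsprec p q \<in> tsN scaleV" "tsprec q p \<in> tsN scaleV" using tsN_ideal by blast+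
next
  fix p q r
  show "tsprec (tsprec p q) r - tsprec (tsprec p r) q \<in> tsN scaleV"
    by (simp add: tsprec_right_comm[of p q r] tsN_zero)
  show "tsprec p (tsprec q r) \<in> tsN scaleV"
    by (simp add: tsprec_right_zero tsN_zero)
qed




lemma vs_fscale: "vector_space (fscale :: 'k::field \<Rightarrow> ('g \<Rightarrow>\<^sub>0 'k) \<Rightarrow> _)"
  by (rule fs.vector_space_axioms)

locale moorctx =
  fixes scaleV :: "'k::field \<Rightarrow> 'v::ab_group_add \<Rightarrow> 'v"
    and scaleA :: "'k \<Rightarrow> 'a::ab_group_add \<Rightarrow> 'a"
    and pr :: "'a \<Rightarrow> 'a \<Rightarrow> 'a"
    and f :: "'v \<Rightarrow> 'a"
  assumes moor: "moor_algebra scaleA pr"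
    and lin: "Vector_Spaces.linear scaleV scaleA f"
begin

lemma vsA: "vector_space scaleA" using moor unfolding moor_algebra_def by blast

interpretation A: vector_space scaleA by (rule vsA)

lemma pr_right_add: "pr x (y + z) = pr x y + pr x z"
  and pr_right_scale: "pr x (scaleA c y) = scaleA c (pr x y)"
  and pr_left_add: "pr (y + z) x = pr y x + pr z x"
  and pr_left_scale: "pr (scaleA c y) x = scaleA c (pr y x)"
  and pr_comm: "pr (pr x y) z = pr (pr x z) y"
  and pr_zero: "pr x (pr y z) = 0"
  using moor unfolding moor_algebra_def Vector_Spaces.linear_iff by blast+

lemma f_add: "f (x + y) = f x + f y" and f_scale: "f (scaleV c x) = scaleA c (f x)"
  using lin unfolding Vector_Spaces.linear_iff by blast+

interpretation cfc: comp_fun_commute "\<lambda>m a. pr a (f m)"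
  by unfold_locales (auto simp: fun_eq_iff pr_comm)

definition gfun :: "'v \<times> 'v multiset \<Rightarrow> 'a" where
  "gfun x = fold_mset (\<lambda>m a. pr a (f m)) (f (fst x)) (snd x)"

lemma gfun_empty [simp]: "gfun (v, {#}) = f v"
  by (simp add: gfun_def)

lemma gfun_add [simp]: "gfun (v, add_mset m M) = pr (gfun (v, M)) (f m)"
  by (simp add: gfun_def)

lemma gfun_lin1: "gfun (scaleV a u + scaleV b w, M) = scaleA a (gfun (u, M)) + scaleA b (gfun (w, M))"
  by (induction M) (simp_all add: f_add f_scale pr_left_add pr_left_scale)

lemma gfun_lin2: "gfun (v, add_mset (scaleV a u + scaleV b w) M) =
   scaleA a (gfun (v, add_mset u M)) + scaleA b (gfun (v, add_mset w M))"
  by (simp add: f_add f_scale pr_right_add pr_right_scale)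

definition Gmap :: "(('v \<times> 'v multiset) \<Rightarrow>\<^sub>0 'k) \<Rightarrow> 'a" where
  "Gmap p = (\<Sum>x\<in>Poly_Mapping.keys p. scaleA (Poly_Mapping.lookup p x) (gfun x))"

lemma Gmap_eq:
  assumes "finite S" "Poly_Mapping.keys p \<subseteq> S"
  shows "Gmap p = (\<Sum>x\<in>S. scaleA (Poly_Mapping.lookup p x) (gfun x))"
  unfolding Gmap_def using assms
  by (intro sum.mono_neutral_left) (auto simp: in_keys_iff)

lemma Gmap_add: "Gmap (p + q) = Gmap p + Gmap q"
proof -
  let ?S = "Poly_Mapping.keys p \<union> Poly_Mapping.keys q"
  have "Gmap (p + q) = (\<Sum>x\<in>?S. scaleA (Poly_Mapping.lookup (p+q) x) (gfun x))"
    using keys_add[of p q] by (intro Gmap_eq) auto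
  also have "\<dots> = (\<Sum>x\<in>?S. scaleA (Poly_Mapping.lookup p x) (gfun x) + scaleA (Poly_Mapping.lookup q x) (gfun x))"
    by (simp add: lookup_add A.scale_left_distrib)
  also have "\<dots> = Gmap p + Gmap q"
    by (simp add: sum.distrib Gmap_eq[of ?S])
  finally show ?thesis .
qed

lemma Gmap_scale: "Gmap (fscale c p) = scaleA c (Gmap p)"
proof -
  let ?S = "Poly_Mapping.keys p"
  have "Gmap (fscale c p) = (\<Sum>x\<in>?S. scaleA (Poly_Mapping.lookup (fscale c p) x) (gfun x))"
    by (intro Gmap_eq) (auto simp: in_keys_iff)
  also have "\<dots> = scaleA c (Gmap p)"
    by (simp add: Gmap_def A.scale_sum_right)
  finally show ?thesis .
qed

lemma Gmap_single: "Gmap (Poly_Mapping.single x c) = scaleA c (gfun x)"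
  by (subst Gmap_eq[of "{x}"]) auto

lemma Gmap_zero [simp]: "Gmap 0 = 0"
  by (simp add: Gmap_def)

lemma Gmap_diff: "Gmap (p - q) = Gmap p - Gmap q"
  by (metis Gmap_add add_diff_cancel diff_add_cancel)

lemma Gmap_linear: "Vector_Spaces.linear fscale scaleA Gmap"
  unfolding Vector_Spaces.linear_iff using vs_fscale vsA Gmap_add Gmap_scale by blast

lemma Gmap_tsN: "p \<in> tsN scaleV \<Longrightarrow> Gmap p = 0"
  unfolding tsN_tsgens
proof (induction p rule: fs.span_induct_alt)
  case base
  then show ?case by simp
next
  case (step c x y)
  have "Gmap x = 0" using step(1) unfolding tsgens_def
    by (auto simp: Gmap_diff Gmap_single gfun_lin1 gfun_lin2 simp del: gfun_add)
  then show ?case using step by (simp add: Gmap_add Gmap_scale)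
qed

lemma Gmap_mult: "Gmap (tsprec p q) = pr (Gmap p) (Gmap q)"
proof (induction p rule: pm_induct)
  case (single x a)
  then show ?case
  proof (induction q rule: pm_induct)
    case (single y b)
    obtain v M where y: "y = (v, M)" by (cases y)
    show ?case
    proof (cases M)
      case empty
      then show ?thesis using y
        by (cases x) (simp add: tsprec_single Gmap_single pr_left_scale pr_right_scale)
    next
      case (add m M')
      then show ?thesis using y
        by (simp add: tsprec_single Gmap_single pr_left_scale pr_right_scale pr_zero)
    qed
  next
    case (add p q)
    then show ?case by (simp add: tsprec_add_right Gmap_add pr_right_add)
  qed
next
  case (add p q)
  then show ?case by (simp add: tsprec_add_left Gmap_add pr_left_add)
qed

lemma Gmap_tsi: "Gmap (tsi v) = f v"
  by (simp add: tsi_def Gmap_single)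

lemma Gmap_morph: "moor_morphism_from_ts scaleV scaleA pr Gmap"
  unfolding moor_morphism_from_ts_def using Gmap_linear Gmap_tsN Gmap_mult by blast

lemma Gmap_unique:
  assumes "moor_morphism_from_ts scaleV scaleA pr G" "\<forall>v. G (tsi v) = f v"
  shows "G = Gmap"
proof -
  have Gadd: "G (p + q) = G p + G q" and Gsc: "G (fscale c p) = scaleA c (G p)"
    and Gm: "G (tsprec p q) = pr (G p) (G q)" for p q c
    using assms(1) unfolding moor_morphism_from_ts_def Vector_Spaces.linear_iff by blast+
  have g1: "G (Poly_Mapping.single (v, M) 1) = gfun (v, M)" for v M
  proof (induction M)
    case empty
    then show ?case using assms(2) by (simp add: tsi_def)
  next
    case (add m M)
    have "Poly_Mapping.single (v, add_mset m M) (1::'k) = tsprec (Poly_Mapping.single (v, M) 1) (tsi m)"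
      by (simp add: tsi_def tsprec_single)
    then show ?case using add assms(2) Gm by simp
  qed
  have "G p = Gmap p" for p
  proof (induction p rule: pm_induct)
    case (single x a)
    have "G (Poly_Mapping.single x a) = G (fscale a (Poly_Mapping.single x 1))" by simp
    also have "\<dots> = scaleA a (G (Poly_Mapping.single x 1))" by (rule Gsc)
    also have "\<dots> = scaleA a (gfun x)" using g1[of "fst x" "snd x"] by simp
    finally show ?case by (simp add: Gmap_single)
  next
    case (add p q)
    then show ?case by (simp add: Gadd Gmap_add)
  qed
  then show ?thesis by blast
qed

lemma univ: "\<exists>!G. moor_morphism_from_ts scaleV scaleA pr G \<and> (\<forall>v. G (tsi v) = f v)"
  using Gmap_morph Gmap_tsi Gmap_unique by blast

end

lemma universal_property:
  "moor_algebra scaleA pr \<and> Vector_Spaces.linear scaleV scaleA f \<longrightarrow>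
     (\<exists>!G. moor_morphism_from_ts scaleV scaleA pr G \<and> (\<forall>v. G (tsi v) = f v))"
  using moorctx.univ moorctx.intro by blast




abbreviation T3 :: "nat \<Rightarrow> nat \<Rightarrow> nat \<Rightarrow> tree" where "T3 i j k \<equiv> Nd (Nd (L i) (L j)) (L k)"
abbreviation U3 :: "nat \<Rightarrow> nat \<Rightarrow> nat \<Rightarrow> tree" where "U3 i j k \<equiv> Nd (L i) (Nd (L j) (L k))"

lemma perm3_iff: "is_perm3 i j k \<longleftrightarrow>
  (i,j,k) \<in> {(1,2,3),(1,3,2),(2,1,3),(2,3,1),(3,1,2),(3,2,1)}"
proof
  assume h: "is_perm3 i j k"
  then have "i \<in> {1,2,3}" "j \<in> {1,2,3}" "k \<in> {1,2,3}" "i \<noteq> j" "i \<noteq> k" "j \<noteq> k"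
    unfolding is_perm3_def by (auto simp: insert_eq_iff)
  then show "(i,j,k) \<in> {(1,2,3),(1,3,2),(2,1,3),(2,3,1),(3,1,2),(3,2,1)}" by auto
next
  assume "(i,j,k) \<in> {(1,2,3),(1,3,2),(2,1,3),(2,3,1),(3,1,2),(3,2,1)}"
  then show "is_perm3 i j k" unfolding is_perm3_def by auto
qed

lemma leaves_ne: "leaves t \<noteq> []"
  by (induction t) auto

lemma len_pos: "length (leaves t) > 0"
  using leaves_ne by auto

lemma len1: "length (leaves t) = 1 \<Longrightarrow> \<exists>a. t = L a"
proof (cases t)
  case (Node l r)
  assume "length (leaves t) = 1"
  then have "length (leaves l) + length (leaves r) = 1" using Node by simp
  then show ?thesis using len_pos[of l] len_pos[of r] by linarith
qed auto

lemma len2: "length (leaves t) = 2 \<Longrightarrow> \<exists>a b. t = Nd (L a) (L b)"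
proof (cases t)
  case (Node l r)
  assume "length (leaves t) = 2"
  then have "length (leaves l) + length (leaves r) = 2" using Node by simp
  then have "length (leaves l) = 1" "length (leaves r) = 1" using len_pos[of l] len_pos[of r] by linarith+
  then show ?thesis using Node len1 by blast
qed auto

lemma len3: "length (leaves t) = 3 \<Longrightarrow> \<exists>a b c. t = T3 a b c \<or> t = U3 a b c"
proof (cases t)
  case (Node l r)
  assume h: "length (leaves t) = 3"
  then have "length (leaves l) + length (leaves r) = 3" using Node by simp
  then have "(length (leaves l) = 1 \<and> length (leaves r) = 2) \<or> (length (leaves l) = 2 \<and> length (leaves r) = 1)"
    using len_pos[of l] len_pos[of r] by linarith
  then show ?thesis using Node len1 len2 by blast
qed auto

lemma multilin3: "t \<in> multilin 3 \<longleftrightarrow> (\<exists>i j k. is_perm3 i j k \<and> (t = T3 i j k \<or> t = U3 i j k))"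
proof
  assume h: "t \<in> multilin 3"
  then have d: "distinct (leaves t)" and s: "set (leaves t) = {1..3}" unfolding multilin_def by auto
  then have "length (leaves t) = 3" using distinct_card[OF d] by simp
  then obtain a b c where t: "t = T3 a b c \<or> t = U3 a b c" using len3 by blast
  have e: "{1..3::nat} = {1,2,3}" by auto
  have l: "leaves t = [a,b,c]" using t by auto
  have "is_perm3 a b c" using d s unfolding is_perm3_def l e by simp
  then show "\<exists>i j k. is_perm3 i j k \<and> (t = T3 i j k \<or> t = U3 i j k)" using t by blast
next
  assume "\<exists>i j k. is_perm3 i j k \<and> (t = T3 i j k \<or> t = U3 i j k)"
  then show "t \<in> multilin 3" unfolding multilin_def is_perm3_def by auto
qed

lemma multilin3_explicit: "t \<in> multilin 3 \<longleftrightarrow> t \<in> {T3 1 2 3, T3 1 3 2, T3 2 1 3, T3 2 3 1, T3 3 1 2, T3 3 2 1,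
   U3 1 2 3, U3 1 3 2, U3 2 1 3, U3 2 3 1, U3 3 1 2, U3 3 2 1}"
  unfolding multilin3 perm3_iff by auto

lemma perm3_swap: "is_perm3 i j k \<Longrightarrow> is_perm3 i k j"
  unfolding is_perm3_def by auto

lemma subspace_freeop: "fs.subspace (freeop n)"
  unfolding fs.subspace_def freeop_def
proof (intro conjI ballI allI)
  fix x y :: "tree \<Rightarrow>\<^sub>0 'a"
  assume "x \<in> {p. Poly_Mapping.keys p \<subseteq> multilin n}" "y \<in> {p. Poly_Mapping.keys p \<subseteq> multilin n}"
  then show "x + y \<in> {p. Poly_Mapping.keys p \<subseteq> multilin n}" using keys_add[of x y] by auto
qed (auto simp: in_keys_iff)

lemma R_Moor_freeop: "R_Moor \<subseteq> freeop 3"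
  unfolding R_Moor_def
proof (rule fs.span_minimal[OF _ subspace_freeop], rule subsetI)
  fix x :: "tree \<Rightarrow>\<^sub>0 'a"
  assume "x \<in> {rel_nap i j k |i j k. is_perm3 i j k} \<union> {rel_right i j k |i j k. is_perm3 i j k}"
  then obtain i j k where p: "is_perm3 i j k" and x: "x = rel_nap i j k \<or> x = rel_right i j k" by blast
  have "Poly_Mapping.keys x \<subseteq> {T3 i j k, T3 i k j, U3 i j k}"
    using x keys_diff[of "Poly_Mapping.single (T3 i j k) (1::'a)" "Poly_Mapping.single (T3 i k j) 1"]
    unfolding rel_nap_def rel_right_def by auto
  also have "\<dots> \<subseteq> multilin 3" using p perm3_swap[OF p] by (simp add: multilin3)
  finally show "x \<in> freeop 3" unfolding freeop_def by simp
qed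




lemma finite_multilin3: "finite (multilin 3)"
proof -
  have "multilin 3 = {T3 1 2 3, T3 1 3 2, T3 2 1 3, T3 2 3 1, T3 3 1 2, T3 3 2 1,
   U3 1 2 3, U3 1 3 2, U3 2 1 3, U3 2 3 1, U3 3 1 2, U3 3 2 1}"
    by (rule set_eqI, rule multilin3_explicit)
  then show ?thesis by simp
qed

lemma gk_add_left: "gk_pair (p1 + p2) q = gk_pair p1 q + gk_pair p2 q"
  unfolding gk_pair_def by (simp add: lookup_add algebra_simps sum.distrib)

lemma gk_add_right: "gk_pair p (q1 + q2) = gk_pair p q1 + gk_pair p q2"
  unfolding gk_pair_def by (simp add: lookup_add algebra_simps sum.distrib)

lemma gk_scale_left: "gk_pair (fscale c p) q = c * gk_pair p q"
  unfolding gk_pair_def by (simp add: sum_distrib_left mult_ac)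

lemma gk_scale_right: "gk_pair p (fscale c q) = c * gk_pair p q"
  unfolding gk_pair_def by (simp add: sum_distrib_left mult_ac)

lemma gk_zero_left [simp]: "gk_pair 0 q = 0"
  unfolding gk_pair_def by simp

lemma gk_diff_left: "gk_pair (p1 - p2) q = gk_pair p1 q - gk_pair p2 q"
  by (metis add_diff_cancel diff_add_cancel gk_add_left)

lemma gk_single: "gk_pair (Poly_Mapping.single t c) q =
   (if t \<in> multilin 3 then gk_weight t * c * Poly_Mapping.lookup q t else 0)"
  unfolding gk_pair_def using finite_multilin3
  by (simp add: lookup_single when_def if_distrib if_distribR sum.delta cong: if_cong)

lemma sgn3_swap: "is_perm3 i j k \<Longrightarrow> sgn3 i k j = - (sgn3 i j k :: 'k::field)"
  unfolding perm3_iff sgn3_def by auto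

lemma sgn3_nz: "(sgn3 i j k :: 'k::field) \<noteq> 0"
  unfolding sgn3_def by auto

lemma gk_nap:
  assumes "is_perm3 i j k"
  shows "gk_pair (rel_nap i j k) q =
     (sgn3 i j k :: 'k::field) * (Poly_Mapping.lookup q (T3 i j k) + Poly_Mapping.lookup q (T3 i k j))"
proof -
  have "T3 i j k \<in> multilin 3" "T3 i k j \<in> multilin 3"
    using assms perm3_swap[OF assms] unfolding multilin3 by blast+
  then show ?thesis
    unfolding rel_nap_def gk_diff_left gk_single
    by (simp add: sgn3_swap[OF assms] algebra_simps)
qed

definition napcond :: "(tree \<Rightarrow>\<^sub>0 'k::field) \<Rightarrow> bool" where
  "napcond q \<longleftrightarrow> (\<forall>i j k. is_perm3 i j k \<longrightarrow>
      Poly_Mapping.lookup q (T3 i j k) + Poly_Mapping.lookup q (T3 i k j) = 0)"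

lemma cond_iff: "(\<forall>p\<in>R_NAP. gk_pair p q = 0) \<longleftrightarrow> napcond (q :: tree \<Rightarrow>\<^sub>0 'k::field)"
proof
  assume h: "\<forall>p\<in>R_NAP. gk_pair p q = 0"
  show "napcond q" unfolding napcond_def
  proof (intro allI impI)
    fix i j k assume p: "is_perm3 i j k"
    have "rel_nap i j k \<in> (R_NAP :: (tree \<Rightarrow>\<^sub>0 'k) set)"
      unfolding R_NAP_def using p by (intro fs.span_base) blast
    then have "gk_pair (rel_nap i j k) q = 0" using h by blast
    then have "(sgn3 i j k :: 'k) * (Poly_Mapping.lookup q (T3 i j k) + Poly_Mapping.lookup q (T3 i k j)) = 0"
      using gk_nap[OF p, of q] by simp
    moreover have "(sgn3 i j k :: 'k) \<noteq> 0" by (rule sgn3_nz)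
    ultimately show "Poly_Mapping.lookup q (T3 i j k) + Poly_Mapping.lookup q (T3 i k j) = 0"
      by simp
  qed
next
  assume c: "napcond q"
  show "\<forall>p\<in>R_NAP. gk_pair p q = 0"
  proof
    fix p :: "tree \<Rightarrow>\<^sub>0 'k" assume "p \<in> R_NAP"
    then show "gk_pair p q = 0" unfolding R_NAP_def
    proof (induction p rule: fs.span_induct_alt)
      case base then show ?case by simp
    next
      case (step c' x y)
      then obtain i j k where p': "is_perm3 i j k" and x: "x = rel_nap i j k" by blast
      have "Poly_Mapping.lookup q (T3 i j k) + Poly_Mapping.lookup q (T3 i k j) = 0"
        using c p' unfolding napcond_def by blast
      then have "gk_pair x q = 0" using gk_nap[OF p', of q] x by simp
      then show ?case using step by (simp add: gk_add_left gk_scale_left)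
    qed
  qed
qed

lemma perm3_123: "is_perm3 1 2 3" "is_perm3 1 3 2" "is_perm3 2 1 3" "is_perm3 2 3 1" "is_perm3 3 1 2" "is_perm3 3 2 1"
  unfolding perm3_iff by auto

lemma R_Moor_nap: "is_perm3 i j k \<Longrightarrow> fscale c (rel_nap i j k) \<in> R_Moor"
  unfolding R_Moor_def by (intro fs.span_scale fs.span_base) blast

lemma R_Moor_right: "is_perm3 i j k \<Longrightarrow> fscale c (rel_right i j k) \<in> R_Moor"
  unfolding R_Moor_def by (intro fs.span_scale fs.span_base) blast

lemma R_Moor_add: "x \<in> R_Moor \<Longrightarrow> y \<in> R_Moor \<Longrightarrow> x + y \<in> R_Moor"
  unfolding R_Moor_def by (rule fs.span_add)

lemma napcond_R_Moor: "q \<in> R_Moor \<Longrightarrow> napcond q"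
  unfolding R_Moor_def
proof (induction q rule: fs.span_induct_alt)
  case base then show ?case by (simp add: napcond_def)
next
  case (step c x y)
  from step(1) obtain i j k where p: "is_perm3 i j k" and x: "x = rel_nap i j k \<or> x = rel_right i j k" by blast
  have "napcond x" using x unfolding napcond_def
  proof (elim disjE)
    assume x: "x = rel_nap i j k"
    show "\<forall>a b c. is_perm3 a b c \<longrightarrow> Poly_Mapping.lookup x (T3 a b c) + Poly_Mapping.lookup x (T3 a c b) = 0"
    proof (intro allI impI)
      fix a b c
      show "Poly_Mapping.lookup x (T3 a b c) + Poly_Mapping.lookup x (T3 a c b) = 0"
        unfolding x rel_nap_def lookup_minus lookup_single when_def
        by (cases "i = a"; cases "j = b"; cases "k = c"; cases "j = c"; cases "k = b") simp_all
    qed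
  next
    assume x: "x = rel_right i j k"
    show "\<forall>a b c. is_perm3 a b c \<longrightarrow> Poly_Mapping.lookup x (T3 a b c) + Poly_Mapping.lookup x (T3 a c b) = 0"
      unfolding x rel_right_def by (simp add: lookup_single when_def)
  qed
  show ?case unfolding napcond_def
  proof (intro allI impI)
    fix a b d assume pa: "is_perm3 a b d"
    have 1: "Poly_Mapping.lookup x (T3 a b d) + Poly_Mapping.lookup x (T3 a d b) = 0"
      using \<open>napcond x\<close> pa unfolding napcond_def by blast
    have 2: "Poly_Mapping.lookup y (T3 a b d) + Poly_Mapping.lookup y (T3 a d b) = 0"
      using step(2) pa unfolding napcond_def by blast
    have "Poly_Mapping.lookup (fscale c x + y) (T3 a b d) + Poly_Mapping.lookup (fscale c x + y) (T3 a d b)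
      = c * (Poly_Mapping.lookup x (T3 a b d) + Poly_Mapping.lookup x (T3 a d b))
        + (Poly_Mapping.lookup y (T3 a b d) + Poly_Mapping.lookup y (T3 a d b))"
      by (simp add: lookup_add algebra_simps)
    then show "Poly_Mapping.lookup (fscale c x + y) (T3 a b d) + Poly_Mapping.lookup (fscale c x + y) (T3 a d b) = 0"
      using 1 2 by simp
  qed
qed

lemma freeop_napcond_R_Moor:
  fixes q :: "tree \<Rightarrow>\<^sub>0 'k::field"
  assumes f: "q \<in> freeop 3" and c: "napcond q"
  shows "q \<in> R_Moor"
proof -
  let ?q = "Poly_Mapping.lookup q"
  define E :: "tree \<Rightarrow>\<^sub>0 'k" where "E =
    fscale (?q (T3 1 2 3)) (rel_nap 1 2 3) + fscale (?q (T3 2 1 3)) (rel_nap 2 1 3)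
    + fscale (?q (T3 3 1 2)) (rel_nap 3 1 2)
    + fscale (?q (U3 1 2 3)) (rel_right 1 2 3) + fscale (?q (U3 1 3 2)) (rel_right 1 3 2)
    + fscale (?q (U3 2 1 3)) (rel_right 2 1 3) + fscale (?q (U3 2 3 1)) (rel_right 2 3 1)
    + fscale (?q (U3 3 1 2)) (rel_right 3 1 2) + fscale (?q (U3 3 2 1)) (rel_right 3 2 1)"
  have E: "E \<in> R_Moor" unfolding E_def
    by (intro R_Moor_add R_Moor_nap R_Moor_right perm3_123)
  have c1: "?q (T3 1 3 2) = - ?q (T3 1 2 3)" "?q (T3 2 3 1) = - ?q (T3 2 1 3)" "?q (T3 3 2 1) = - ?q (T3 3 1 2)"
    using c perm3_123 unfolding napcond_def by (metis add_eq_0_iff)+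
  have "q = E"
  proof (rule poly_mapping_eqI)
    fix t
    show "?q t = Poly_Mapping.lookup E t"
    proof (cases "t \<in> multilin 3")
      case True
      then show ?thesis unfolding multilin3_explicit
        by (elim insertE emptyE; simp add: E_def rel_nap_def rel_right_def lookup_add lookup_minus lookup_single when_def c1[unfolded One_nat_def])
    next
      case False
      then have "?q t = 0" using f unfolding freeop_def by (auto simp: in_keys_iff)
      moreover have "t \<noteq> T3 1 2 3" "t \<noteq> T3 1 3 2" "t \<noteq> T3 2 1 3" "t \<noteq> T3 2 3 1" "t \<noteq> T3 3 1 2" "t \<noteq> T3 3 2 1"
        "t \<noteq> U3 1 2 3" "t \<noteq> U3 1 3 2" "t \<noteq> U3 2 1 3" "t \<noteq> U3 2 3 1" "t \<noteq> U3 3 1 2" "t \<noteq> U3 3 2 1"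
        using False unfolding multilin3_explicit by auto
      ultimately show ?thesis
        by (simp add: E_def rel_nap_def rel_right_def lookup_add lookup_minus lookup_single when_def)
    qed
  qed
  then show ?thesis using E by simp
qed

lemma koszul: "koszul_dual_rel (R_NAP :: (tree \<Rightarrow>\<^sub>0 'k::field) set) = R_Moor"
  unfolding koszul_dual_rel_def cond_iff
  using freeop_napcond_R_Moor napcond_R_Moor R_Moor_freeop by blast




lemma lin_map_eq:
  assumes "finite S" "Poly_Mapping.keys p \<subseteq> S"
  shows "lin_map h p = (\<Sum>t\<in>S. Poly_Mapping.single (h t) (Poly_Mapping.lookup p t))"
  unfolding lin_map_def using assms
  by (intro sum.mono_neutral_left) (auto simp: in_keys_iff)

lemma lin_map_add: "lin_map h (p + q) = lin_map h p + lin_map h q"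
proof -
  let ?S = "Poly_Mapping.keys p \<union> Poly_Mapping.keys q"
  have "lin_map h (p + q) = (\<Sum>t\<in>?S. Poly_Mapping.single (h t) (Poly_Mapping.lookup (p+q) t))"
    using keys_add[of p q] by (intro lin_map_eq) auto
  also have "\<dots> = (\<Sum>t\<in>?S. Poly_Mapping.single (h t) (Poly_Mapping.lookup p t) + Poly_Mapping.single (h t) (Poly_Mapping.lookup q t))"
    by (simp add: lookup_add single_add)
  also have "\<dots> = lin_map h p + lin_map h q"
    by (simp add: sum.distrib lin_map_eq[of ?S])
  finally show ?thesis .
qed

lemma lin_map_scale: "lin_map h (fscale c p) = fscale c (lin_map h p)"
proof -
  have "lin_map h (fscale c p) = (\<Sum>t\<in>Poly_Mapping.keys p. Poly_Mapping.single (h t) (Poly_Mapping.lookup (fscale c p) t))"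
    by (intro lin_map_eq) (auto simp: in_keys_iff)
  also have "\<dots> = fscale c (lin_map h p)"
    by (simp add: lin_map_def fs.scale_sum_right)
  finally show ?thesis .
qed

lemma lin_map_single: "lin_map h (Poly_Mapping.single t c) = Poly_Mapping.single (h t) c"
  by (subst lin_map_eq[of "{t}"]) auto

lemma lin_map_zero [simp]: "lin_map h 0 = 0"
  by (simp add: lin_map_def)

lemma lin_map_diff: "lin_map h (p - q) = lin_map h p - lin_map h q"
  by (metis add_diff_cancel diff_add_cancel lin_map_add)

section \<open>Left combs\<close>

fun isleaf :: "tree \<Rightarrow> bool" where
  "isleaf (Leaf i) = True"
| "isleaf (Node l r) = False"

fun lc :: "tree \<Rightarrow> bool" where
  "lc (Leaf i) = True"
| "lc (Node l r) = (lc l \<and> isleaf r)"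

fun hdt :: "tree \<Rightarrow> nat" where
  "hdt (Leaf i) = i"
| "hdt (Node l r) = hdt l"

lemma plug_inv:
  assumes "isleaf X = isleaf Y" "lc X = lc Y" "hdt X = hdt Y"
  shows "lc (plug C X) = lc (plug C Y) \<and> hdt (plug C X) = hdt (plug C Y) \<and> isleaf (plug C X) = isleaf (plug C Y)"
  using assms by (induction C) auto

lemma plug_notleaf: "0 \<in> set (leaves C) \<Longrightarrow> \<not> isleaf X \<Longrightarrow> \<not> isleaf (plug C X)"
  by (induction C) auto

lemma plug_notlc: "0 \<in> set (leaves C) \<Longrightarrow> \<not> lc X \<Longrightarrow> \<not> isleaf X \<Longrightarrow> \<not> lc (plug C X)"
  by (induction C) (auto simp: plug_notleaf)

definition phi :: "nat \<Rightarrow> (tree \<Rightarrow>\<^sub>0 'k::field) \<Rightarrow> 'k" where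
  "phi i p = (\<Sum>t\<in>Poly_Mapping.keys p. if lc t \<and> hdt t = i then Poly_Mapping.lookup p t else 0)"

lemma phi_eq:
  assumes "finite S" "Poly_Mapping.keys p \<subseteq> S"
  shows "phi i p = (\<Sum>t\<in>S. if lc t \<and> hdt t = i then Poly_Mapping.lookup p t else 0)"
  unfolding phi_def using assms
  by (intro sum.mono_neutral_left) (auto simp: in_keys_iff)

lemma phi_add: "phi i (p + q) = phi i p + phi i q"
proof -
  let ?S = "Poly_Mapping.keys p \<union> Poly_Mapping.keys q"
  have "phi i (p + q) = (\<Sum>t\<in>?S. if lc t \<and> hdt t = i then Poly_Mapping.lookup (p+q) t else 0)"
    using keys_add[of p q] by (intro phi_eq) auto
  also have "\<dots> = (\<Sum>t\<in>?S. (if lc t \<and> hdt t = i then Poly_Mapping.lookup p t else 0) + (if lc t \<and> hdt t = i then Poly_Mapping.lookup q t else 0))"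
    by (intro sum.cong refl) (simp add: lookup_add)
  also have "\<dots> = phi i p + phi i q"
    by (simp add: sum.distrib phi_eq[of ?S])
  finally show ?thesis .
qed

lemma phi_scale: "phi i (fscale c p) = c * phi i p"
proof -
  have "phi i (fscale c p) = (\<Sum>t\<in>Poly_Mapping.keys p. if lc t \<and> hdt t = i then Poly_Mapping.lookup (fscale c p) t else 0)"
    by (intro phi_eq) (auto simp: in_keys_iff)
  also have "\<dots> = c * phi i p"
    by (simp add: phi_def sum_distrib_left if_distrib cong: if_cong)
  finally show ?thesis .
qed

lemma phi_single: "phi i (Poly_Mapping.single t c) = (if lc t \<and> hdt t = i then c else 0)"
  by (subst phi_eq[of "{t}"]) auto

lemma phi_zero [simp]: "phi i 0 = 0"
  by (simp add: phi_def)

lemma phi_diff: "phi i (p - q) = phi i p - phi i q"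
  by (metis add_diff_cancel diff_add_cancel phi_add)

lemma phi_span: "p \<in> fs.span S \<Longrightarrow> (\<And>s. s \<in> S \<Longrightarrow> phi i s = 0) \<Longrightarrow> phi i p = 0"
proof (induction p rule: fs.span_induct_alt)
  case base then show ?case by simp
next
  case (step c x y) then show ?case by (simp add: phi_add phi_scale)
qed

lemma subst3_node: "subst3 (Node s t) a b c = Node (subst3 s a b c) (subst3 t a b c)"
  by simp

lemma phi_gen:
  assumes r: "r \<in> R_Moor" and C: "count (mset (leaves C)) 0 = 1"
  shows "phi i (lin_map (plug C) (lin_map (\<lambda>t. subst3 t a b c) r)) = (0::'k::field)"
  using r unfolding R_Moor_def
proof (induction r rule: fs.span_induct_alt)
  case base then show ?case by simp
next
  case (step d x y)
  have C0: "0 \<in> set (leaves C)" using C by (metis count_eq_zero_iff set_mset_mset zero_neq_one)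
  let ?s = "\<lambda>n. subst3 (Leaf n) a b c"
  from step(1) obtain i' j' k' where x: "x = rel_nap i' j' k' \<or> x = rel_right i' j' k'" by blast
  have "phi i (lin_map (plug C) (lin_map (\<lambda>t. subst3 t a b c) x)) = (0::'k)"
    using x
  proof (elim disjE)
    assume x: "x = rel_nap i' j' k'"
    have inv: "lc (plug C (Nd (Nd (?s i') (?s j')) (?s k'))) = lc (plug C (Nd (Nd (?s i') (?s k')) (?s j')))
       \<and> hdt (plug C (Nd (Nd (?s i') (?s j')) (?s k'))) = hdt (plug C (Nd (Nd (?s i') (?s k')) (?s j')))"
    proof -
      have pr: "lc (Nd (Nd (?s i') (?s j')) (?s k')) = lc (Nd (Nd (?s i') (?s k')) (?s j'))"
        by (simp only: lc.simps conj_ac)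
      have "isleaf (Nd (Nd (?s i') (?s j')) (?s k')) = isleaf (Nd (Nd (?s i') (?s k')) (?s j'))"
        "hdt (Nd (Nd (?s i') (?s j')) (?s k')) = hdt (Nd (Nd (?s i') (?s k')) (?s j'))"
        by (simp only: isleaf.simps hdt.simps)+
      then show ?thesis using plug_inv[OF _ pr, of C] by blast
    qed
    show ?thesis unfolding x rel_nap_def
      using inv by (simp del: subst3.simps add: subst3_node lin_map_diff lin_map_single phi_diff phi_single)
  next
    assume x: "x = rel_right i' j' k'"
    have "\<not> lc (plug C (Nd (?s i') (Nd (?s j') (?s k'))))"
      by (rule plug_notlc[OF C0]) auto
    then show ?thesis unfolding x rel_right_def
      by (simp del: subst3.simps add: subst3_node lin_map_single phi_single)
  qed
  then show ?case using step(2) by (simp add: lin_map_add lin_map_scale phi_add phi_scale)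
qed

lemma phi_ideal: "p \<in> op_ideal R_Moor n \<Longrightarrow> phi i p = (0::'k::field)"
  unfolding op_ideal_def by (rule phi_span) (auto intro: phi_gen)




lemma finite_trees: "finite S \<Longrightarrow> finite {t. set (leaves t) \<subseteq> S \<and> length (leaves t) \<le> m}"
proof (induction m)
  case 0
  then show ?case using len_pos by (simp add: not_less_eq_eq[symmetric] leaves_ne)
next
  case (Suc m)
  let ?X = "{t. set (leaves t) \<subseteq> S \<and> length (leaves t) \<le> m}"
  have "{t. set (leaves t) \<subseteq> S \<and> length (leaves t) \<le> Suc m} \<subseteq> Leaf ` S \<union> (\<lambda>(x,y). Node x y) ` (?X \<times> ?X)"
  proof
    fix t assume t: "t \<in> {t. set (leaves t) \<subseteq> S \<and> length (leaves t) \<le> Suc m}"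
    show "t \<in> Leaf ` S \<union> (\<lambda>(x,y). Node x y) ` (?X \<times> ?X)"
    proof (cases t)
      case (Leaf i) then show ?thesis using t by auto
    next
      case (Node l r)
      have "length (leaves l) + length (leaves r) \<le> Suc m" using t Node by simp
      then have "length (leaves l) \<le> m" "length (leaves r) \<le> m"
        using len_pos[of l] len_pos[of r] by linarith+
      then show ?thesis using t Node by auto
    qed
  qed
  moreover have "finite (Leaf ` S \<union> (\<lambda>(x,y). Node x y) ` (?X \<times> ?X))" using Suc by auto
  ultimately show ?case by (rule finite_subset)
qed

lemma finite_multilin: "finite (multilin n)"
proof -
  have "multilin n \<subseteq> {t. set (leaves t) \<subseteq> {1..n} \<and> length (leaves t) \<le> n}"
    unfolding multilin_def using distinct_card by fastforce
  then show ?thesis using finite_trees[of "{1..n}" n] by (rule finite_subset) simp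
qed

definition combl :: "tree \<Rightarrow> nat list \<Rightarrow> tree" where
  "combl t zs = foldl (\<lambda>t z. Node t (Leaf z)) t zs"

lemma combl_Nil [simp]: "combl t [] = t"
  and combl_Cons [simp]: "combl t (z # zs) = combl (Node t (Leaf z)) zs"
  by (simp_all add: combl_def)

lemma combl_append [simp]: "combl t (xs @ ys) = combl (combl t xs) ys"
  by (simp add: combl_def)

lemma leaves_combl [simp]: "leaves (combl t zs) = leaves t @ zs"
  by (induction zs arbitrary: t) auto

lemma lc_combl [simp]: "lc (combl t zs) = lc t"
  by (induction zs arbitrary: t) auto

lemma hdt_combl [simp]: "hdt (combl t zs) = hdt t"
  by (induction zs arbitrary: t) auto

lemma plug_combl: "0 \<notin> set zs \<Longrightarrow> plug (combl T zs) X = combl (plug T X) zs"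
  by (induction zs arbitrary: T) auto

lemma lc_combl_eq: "lc t \<Longrightarrow> t = combl (Leaf (hdt t)) (tl (leaves t))"
proof (induction t)
  case (Leaf x) then show ?case by simp
next
  case (Node l r)
  then obtain z where r: "r = Leaf z" by (cases r) auto
  have "l = combl (Leaf (hdt l)) (tl (leaves l))" using Node by simp
  moreover have "tl (leaves l @ [z]) = tl (leaves l) @ [z]" using leaves_ne[of l] by (cases "leaves l") auto
  ultimately show ?case using r by (metis combl_Cons combl_Nil combl_append hdt.simps(2) leaves.simps)
qed

lemma hdt_in: "hdt t \<in> set (leaves t)"
  by (induction t) auto

lemma plug_id: "0 \<notin> set (leaves r) \<Longrightarrow> plug r X = r"
  by (induction r) auto

section \<open>The ideal\<close>

abbreviation II :: "nat \<Rightarrow> (tree \<Rightarrow>\<^sub>0 'k::field) set" where "II n \<equiv> op_ideal R_Moor n"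

lemma gen_in:
  assumes "r \<in> R_Moor" "count (mset (leaves C)) 0 = 1" "plug C (Node (Node a b) c) \<in> multilin n"
  shows "lin_map (plug C) (lin_map (\<lambda>t. subst3 t a b c) r) \<in> II n"
  unfolding op_ideal_def by (rule fs.span_base) (use assms in blast)

lemma nap123: "(rel_nap 1 2 3 :: tree \<Rightarrow>\<^sub>0 'k::field) \<in> R_Moor"
proof -
  have "is_perm3 1 2 3" by (simp add: is_perm3_def)
  then show ?thesis unfolding R_Moor_def by (intro fs.span_base) blast
qed

lemma right123: "(rel_right 1 2 3 :: tree \<Rightarrow>\<^sub>0 'k::field) \<in> R_Moor"
proof -
  have "is_perm3 1 2 3" by (simp add: is_perm3_def)
  then show ?thesis unfolding R_Moor_def by (intro fs.span_base) blast
qed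

lemma decomp:
  "0 \<notin> set (leaves t) \<Longrightarrow> \<not> lc t \<Longrightarrow> \<exists>C a b c pre post. t = plug C (Nd a (Nd b c)) \<and>
     leaves C = pre @ [0] @ post \<and> 0 \<notin> set pre \<and> 0 \<notin> set post \<and>
     (\<forall>Y. leaves (plug C Y) = pre @ leaves Y @ post)"
proof (induction t)
  case (Leaf x) then show ?case by simp
next
  case (Node l r)
  show ?case
  proof (cases "lc l")
    case False
    then obtain C a b c pre post where h: "l = plug C (Nd a (Nd b c))"
      "leaves C = pre @ [0] @ post" "0 \<notin> set pre" "0 \<notin> set post"
      "\<forall>Y. leaves (plug C Y) = pre @ leaves Y @ post" using Node by auto
    have r: "plug r Y = r" for Y using Node.prems by (intro plug_id) auto
    show ?thesis
      by (rule exI[of _ "Node C r"], rule exI[of _ a], rule exI[of _ b], rule exI[of _ c],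
          rule exI[of _ pre], rule exI[of _ "post @ leaves r"]) (use h r Node.prems in auto)
  next
    case True
    then obtain b c where r: "r = Nd b c" using Node.prems by (cases r) auto
    show ?thesis
      by (rule exI[of _ "Leaf 0"], rule exI[of _ l], rule exI[of _ b], rule exI[of _ c],
          rule exI[of _ "[]"], rule exI[of _ "[]"]) (use r in auto)
  qed
qed

lemma nonlc_in:
  assumes t: "t \<in> multilin n" and nl: "\<not> lc t"
  shows "Poly_Mapping.single t (1::'k::field) \<in> II n"
proof -
  have "0 \<notin> set (leaves t)" using t unfolding multilin_def by auto
  then obtain C a b c pre post where h: "t = plug C (Nd a (Nd b c))"
      "leaves C = pre @ [0] @ post" "0 \<notin> set pre" "0 \<notin> set post"
      "\<forall>Y. leaves (plug C Y) = pre @ leaves Y @ post" using decomp nl by blast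
  have cnt: "count (mset (leaves C)) 0 = 1" using h(2-4) by (simp add: count_eq_zero_iff)
  have "leaves (plug C (Nd (Nd a b) c)) = leaves t" using h(1,5) by simp
  then have m: "plug C (Nd (Nd a b) c) \<in> multilin n" using t unfolding multilin_def by simp
  have "lin_map (plug C) (lin_map (\<lambda>t. subst3 t a b c) (rel_right 1 2 3)) = Poly_Mapping.single t (1::'k)"
    using h(1) by (simp add: rel_right_def lin_map_single)
  then show ?thesis using gen_in[OF right123 cnt m] by metis
qed

abbreviation Q :: "nat \<Rightarrow> nat list \<Rightarrow> (tree \<Rightarrow>\<^sub>0 'k::field)" where
  "Q h xs \<equiv> Poly_Mapping.single (combl (Leaf h) xs) 1"

lemma swap_in:
  assumes d: "distinct (h # pre @ x # y # rest)" and s: "set (h # pre @ x # y # rest) = {1..n}"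
  shows "Q h (pre @ x # y # rest) - Q h (pre @ y # x # rest) \<in> (II n :: (tree \<Rightarrow>\<^sub>0 'k::field) set)"
proof -
  define A where "A = combl (Leaf h) pre"
  define C where "C = combl (Leaf 0) rest"
  have r0: "0 \<notin> set rest"
  proof
    assume "0 \<in> set rest"
    then have "0 \<in> set (h # pre @ x # y # rest)" by simp
    then have "(0::nat) \<in> {1..n}" unfolding s .
    then show False by simp
  qed
  have pl: "plug C Z = combl Z rest" for Z unfolding C_def using r0 by (simp add: plug_combl)
  have cnt: "count (mset (leaves C)) 0 = 1" using r0 by (simp add: C_def count_eq_zero_iff)
  have e1: "combl (Leaf h) (pre @ x # y # rest) = plug C (Nd (Nd A (L x)) (L y))" by (simp add: pl A_def)
  have e2: "combl (Leaf h) (pre @ y # x # rest) = plug C (Nd (Nd A (L y)) (L x))" by (simp add: pl A_def)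
  have m: "plug C (Nd (Nd A (L x)) (L y)) \<in> multilin n"
    using d s unfolding e1[symmetric] multilin_def by simp
  have "lin_map (plug C) (lin_map (\<lambda>t. subst3 t A (L x) (L y)) (rel_nap 1 2 3)) =
     Q h (pre @ x # y # rest) - (Q h (pre @ y # x # rest) :: tree \<Rightarrow>\<^sub>0 'k)"
    unfolding e1 e2 by (simp add: rel_nap_def lin_map_single lin_map_diff)
  then show ?thesis using gen_in[OF nap123 cnt m] by metis
qed

lemma II_add: "p \<in> II n \<Longrightarrow> q \<in> II n \<Longrightarrow> p + q \<in> II n"
  unfolding op_ideal_def by (rule fs.span_add)

lemma II_zero: "0 \<in> II n"
  unfolding op_ideal_def by (rule fs.span_zero)

lemma II_trans: "p - q \<in> II n \<Longrightarrow> q - r \<in> II n \<Longrightarrow> p - r \<in> II n"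
  using II_add[of "p - q" n "q - r"] by simp

lemma insort_in:
  "sorted ys \<Longrightarrow> distinct (h # pre @ x # ys) \<Longrightarrow> set (h # pre @ x # ys) = {1..n} \<Longrightarrow>
   Q h (pre @ x # ys) - Q h (pre @ insort x ys) \<in> (II n :: (tree \<Rightarrow>\<^sub>0 'k::field) set)"
proof (induction ys arbitrary: pre)
  case Nil then show ?case by (simp add: II_zero)
next
  case (Cons y ys)
  show ?case
  proof (cases "x \<le> y")
    case True then show ?thesis by (simp add: II_zero)
  next
    case False
    have 1: "Q h (pre @ x # y # ys) - Q h (pre @ y # x # ys) \<in> (II n :: (tree \<Rightarrow>\<^sub>0 'k) set)"
      using Cons.prems by (intro swap_in) auto
    have 2: "Q h ((pre @ [y]) @ x # ys) - Q h ((pre @ [y]) @ insort x ys) \<in> (II n :: (tree \<Rightarrow>\<^sub>0 'k) set)"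
      using Cons.prems by (intro Cons.IH) auto
    show ?thesis using II_trans[OF 1] 2 False by simp
  qed
qed

lemma sort_in:
  "distinct (h # pre @ l) \<Longrightarrow> set (h # pre @ l) = {1..n} \<Longrightarrow>
   Q h (pre @ l) - Q h (pre @ sort l) \<in> (II n :: (tree \<Rightarrow>\<^sub>0 'k::field) set)"
proof (induction l arbitrary: pre)
  case Nil then show ?case by (simp add: II_zero)
next
  case (Cons x xs)
  have 1: "Q h ((pre @ [x]) @ xs) - Q h ((pre @ [x]) @ sort xs) \<in> (II n :: (tree \<Rightarrow>\<^sub>0 'k) set)"
    using Cons.prems by (intro Cons.IH) auto
  have 2: "Q h (pre @ x # sort xs) - Q h (pre @ insort x (sort xs)) \<in> (II n :: (tree \<Rightarrow>\<^sub>0 'k) set)"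
    using Cons.prems by (intro insort_in) auto
  show ?case using II_trans[OF _ 2] 1 by simp
qed

definition canon :: "nat \<Rightarrow> nat \<Rightarrow> tree" where
  "canon n i = combl (Leaf i) (sorted_list_of_set ({1..n} - {i}))"

lemma lc_in:
  assumes t: "t \<in> multilin n" and l: "lc t"
  shows "Poly_Mapping.single t 1 - Poly_Mapping.single (canon n (hdt t)) 1 \<in> (II n :: (tree \<Rightarrow>\<^sub>0 'k::field) set)"
proof -
  define h where "h = hdt t"
  define xs where "xs = tl (leaves t)"
  have te: "t = combl (Leaf h) xs" unfolding h_def xs_def by (rule lc_combl_eq[OF l])
  have lv: "leaves t = h # xs" by (subst te) simp
  have d: "distinct (h # xs)" and s: "set (h # xs) = {1..n}" using t lv unfolding multilin_def by auto
  have sx: "set xs = {1..n} - {h}" using d s by auto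
  have "sorted_list_of_set ({1..n} - {h}) = sort xs"
    unfolding sx[symmetric] sorted_list_of_set_sort_remdups using d by (simp add: distinct_remdups_id)
  then have c1: "canon n (hdt t) = combl (Leaf h) (sort xs)" unfolding h_def[symmetric] by (simp add: canon_def)
  have t1: "Poly_Mapping.single t (1::'k) = Q h xs" using te by simp
  have "Q h xs - Q h (sort xs) \<in> (II n :: (tree \<Rightarrow>\<^sub>0 'k) set)" using sort_in[of h "[]" xs n] d s by simp
  then show ?thesis unfolding t1 c1 .
qed

section \<open>Dimension\<close>

lemma keys_lin_map: "Poly_Mapping.keys (lin_map h p) \<subseteq> h ` Poly_Mapping.keys p"
  unfolding lin_map_def
  by (rule order.trans[OF keys_sum]) auto

lemma mset_plug: "mset (leaves X) = mset (leaves Y) \<Longrightarrow> mset (leaves (plug C X)) = mset (leaves (plug C Y))"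
  by (induction C) auto

lemma multilin_mset: "mset (leaves x) = mset (leaves y) \<Longrightarrow> x \<in> multilin n \<Longrightarrow> y \<in> multilin n"
  unfolding multilin_def using mset_eq_setD mset_eq_imp_distinct_iff by blast

lemma mset_subst3: "s \<in> multilin 3 \<Longrightarrow> mset (leaves (subst3 s a b c)) = mset (leaves (Nd (Nd a b) c))"
  unfolding multilin3_explicit by (elim insertE emptyE) (simp_all add: ac_simps)

lemma II_freeop: "II n \<subseteq> (freeop n :: (tree \<Rightarrow>\<^sub>0 'k::field) set)"
  unfolding op_ideal_def
proof (rule fs.span_minimal[OF _ subspace_freeop], rule subsetI)
  fix g :: "tree \<Rightarrow>\<^sub>0 'k"
  assume "g \<in> {lin_map (plug C) (lin_map (\<lambda>t. subst3 t a b c) r) | C r a b c.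
        r \<in> R_Moor \<and> count (mset (leaves C)) 0 = 1 \<and> plug C (Node (Node a b) c) \<in> multilin n}"
  then obtain C r a b c where g: "g = lin_map (plug C) (lin_map (\<lambda>t. subst3 t a b c) r)"
    and r: "r \<in> R_Moor" and m: "plug C (Node (Node a b) c) \<in> multilin n" by blast
  have kr: "Poly_Mapping.keys r \<subseteq> multilin 3" using r R_Moor_freeop unfolding freeop_def by blast
  have "Poly_Mapping.keys g \<subseteq> plug C ` (\<lambda>t. subst3 t a b c) ` Poly_Mapping.keys r"
    unfolding g using keys_lin_map by (meson image_mono order.trans)
  also have "\<dots> \<subseteq> multilin n"
  proof clarify
    fix s assume "s \<in> Poly_Mapping.keys r"
    then have "mset (leaves (subst3 s a b c)) = mset (leaves (Nd (Nd a b) c))" using kr mset_subst3 by blast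
    then show "plug C (subst3 s a b c) \<in> multilin n"
      using m mset_plug multilin_mset by metis
  qed
  finally show "g \<in> freeop n" unfolding freeop_def by simp
qed

lemma freeop_expand:
  assumes "(p :: tree \<Rightarrow>\<^sub>0 'k::field) \<in> freeop n"
    and "\<And>t. t \<in> multilin n \<Longrightarrow> Poly_Mapping.single t 1 \<in> fs.span S"
  shows "p \<in> fs.span S"
proof -
  have "p = (\<Sum>x\<in>Poly_Mapping.keys p. fscale (Poly_Mapping.lookup p x) (Poly_Mapping.single x 1))"
    by (subst pm_expand) simp
  also have "\<dots> \<in> fs.span S"
    using assms unfolding freeop_def by (intro fs.span_sum fs.span_scale) auto
  finally show ?thesis .
qed

lemma canon_leaves: "leaves (canon n i) = i # sorted_list_of_set ({1..n} - {i})"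
  by (simp add: canon_def)

lemma canon_multilin: "i \<in> {1..n} \<Longrightarrow> canon n i \<in> multilin n"
  by (auto simp: multilin_def canon_leaves)

lemma lc_canon [simp]: "lc (canon n i)" and hdt_canon [simp]: "hdt (canon n i) = i"
  by (simp_all add: canon_def)

lemma phi_cs: "phi j (Poly_Mapping.single (canon n i) 1) = (if i = j then 1 else 0)"
  by (simp add: phi_single)

lemma freeop_span2:
  assumes "(p :: tree \<Rightarrow>\<^sub>0 'k::field) \<in> freeop n"
  shows "p \<in> fs.span (II n \<union> (\<lambda>i. Poly_Mapping.single (canon n i) 1) ` {1..n})"
proof (rule freeop_expand[OF assms])
  fix t assume t: "t \<in> multilin n"
  let ?S = "II n \<union> (\<lambda>i. Poly_Mapping.single (canon n i) (1::'k)) ` {1..n}"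
  show "Poly_Mapping.single t 1 \<in> fs.span ?S"
  proof (cases "lc t")
    case False
    then show ?thesis using nonlc_in[OF t] by (intro fs.span_base) blast
  next
    case True
    have h: "hdt t \<in> {1..n}" using hdt_in[of t] t unfolding multilin_def by blast
    have 1: "Poly_Mapping.single t 1 - Poly_Mapping.single (canon n (hdt t)) 1 \<in> fs.span ?S"
      using lc_in[OF t True] by (intro fs.span_base) blast
    have 2: "Poly_Mapping.single (canon n (hdt t)) 1 \<in> fs.span ?S"
      using h by (intro fs.span_base) blast
    show ?thesis using fs.span_add[OF 1 2] by simp
  qed
qed

lemma op_dim_n: "op_dim (R_Moor :: (tree \<Rightarrow>\<^sub>0 'k::field) set) n = n"
proof -
  define cs :: "nat \<Rightarrow> tree \<Rightarrow>\<^sub>0 'k" where "cs i = Poly_Mapping.single (canon n i) 1" for i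
  let ?F = "freeop n :: (tree \<Rightarrow>\<^sub>0 'k) set"
  let ?I = "II n :: (tree \<Rightarrow>\<^sub>0 'k) set"
  let ?T = "(\<lambda>t. Poly_Mapping.single t (1::'k)) ` multilin n"
  obtain B where B: "B \<subseteq> ?I" "fs.independent B" "?I \<subseteq> fs.span B" "card B = fs.dim ?I"
    using fs.basis_exists by blast
  have FT: "?F \<subseteq> fs.span ?T"
  proof
    fix p assume p: "p \<in> ?F"
    show "p \<in> fs.span ?T" by (rule freeop_expand[OF p]) (rule fs.span_base, blast)
  qed
  have finB: "finite B"
    using fs.independent_span_bound[of ?T B] finite_multilin B(1,2) II_freeop FT by blast
  have phiB: "phi j b = 0" if "b \<in> B" for j b using that B(1) phi_ideal by blast
  have phics: "phi j (cs i) = (if i = j then 1 else 0)" for i j unfolding cs_def by (rule phi_cs)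
  have indep: "K \<subseteq> {1..n} \<longrightarrow> fs.independent (B \<union> cs ` K)" for K
  proof (induction K rule: infinite_finite_induct)
    case (infinite K) then show ?case by (meson finite_atLeastAtMost finite_subset)
  next
    case empty then show ?case using B(2) by simp
  next
    case (insert j K)
    show ?case
    proof
      assume sub: "insert j K \<subseteq> {1..n}"
      have ind: "fs.independent (B \<union> cs ` K)" using insert sub by blast
      have "phi j p = 0" if "p \<in> fs.span (B \<union> cs ` K)" for p
        using that by (rule phi_span) (use phiB phics insert(2) in auto)
      then have "cs j \<notin> fs.span (B \<union> cs ` K)" using phics[of j j] by force
      then have "fs.independent (insert (cs j) (B \<union> cs ` K))" using ind by (rule fs.independent_insertI)
      then show "fs.independent (B \<union> cs ` insert j K)" by simp
    qed
  qed
  have indep2: "fs.independent (B \<union> cs ` {1..n})" using indep by blast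
  have disj: "B \<inter> cs ` {1..n} = {}"
  proof (rule ccontr)
    assume "B \<inter> cs ` {1..n} \<noteq> {}"
    then obtain i where "cs i \<in> B" by blast
    then show False using phiB[of "cs i" i] phics[of i i] by simp
  qed
  have inj: "inj_on cs {1..n}"
  proof
    fix i i' assume "cs i = cs i'"
    then have "phi i (cs i) = phi i (cs i')" by simp
    then show "i = i'" unfolding phics by (auto split: if_splits)
  qed
  have card: "card (B \<union> cs ` {1..n}) = card B + n"
    using finB disj inj by (simp add: card_Un_disjoint card_image)
  have sub1: "B \<union> cs ` {1..n} \<subseteq> ?F"
    using B(1) II_freeop canon_multilin unfolding cs_def freeop_def by auto
  have sub2: "?F \<subseteq> fs.span (B \<union> cs ` {1..n})"
  proof
    fix p assume "p \<in> ?F"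
    then have "p \<in> fs.span (?I \<union> cs ` {1..n})" unfolding cs_def by (rule freeop_span2)
    moreover have "fs.span (?I \<union> cs ` {1..n}) \<subseteq> fs.span (B \<union> cs ` {1..n})"
    proof (rule fs.span_minimal)
      show "?I \<union> cs ` {1..n} \<subseteq> fs.span (B \<union> cs ` {1..n})"
        using B(3) fs.span_mono[of B "B \<union> cs ` {1..n}"] fs.span_superset[of "B \<union> cs ` {1..n}"] by blast
    qed simp
    ultimately show "p \<in> fs.span (B \<union> cs ` {1..n})" by blast
  qed
  have "fs.dim ?F = card B + n"
    by (rule fs.dim_unique[OF sub1 sub2 indep2 card])
  then show ?thesis unfolding op_dim_def using B(4) by simp
qed

lemma fps_part: "Abs_fps (\<lambda>n. of_nat (op_dim (R_Moor :: (tree \<Rightarrow>\<^sub>0 'k::field_char_0) set) n) / fact n)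
         = (fps_X * fps_exp 1 :: 'k fps)"
proof (rule fps_ext)
  fix n
  show "fps_nth (Abs_fps (\<lambda>n. of_nat (op_dim (R_Moor :: (tree \<Rightarrow>\<^sub>0 'k) set) n) / fact n)) n = fps_nth (fps_X * fps_exp 1 :: 'k fps) n"
  proof (cases n)
    case 0 then show ?thesis by (simp add: op_dim_n)
  next
    case (Suc m)
    have "(of_nat (Suc m) :: 'k) / fact (Suc m) = 1 / fact m"
      by (simp add: field_simps del: of_nat_Suc)
    then show ?thesis using Suc by (simp add: op_dim_n del: of_nat_Suc)
  qed
qed



theorem theorem2p1:
  fixes scaleV :: "'k::field_char_0 \<Rightarrow> 'v::ab_group_add \<Rightarrow> 'v"
  assumes "vector_space scaleV"
  shows
    "koszul_dual_rel (R_NAP :: (tree \<Rightarrow>\<^sub>0 'k) set) = R_Moor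
     \<and> is_free_moor_tensor_sym scaleV
     \<and> (\<forall>(scaleA :: 'k \<Rightarrow> 'a::ab_group_add \<Rightarrow> 'a) pr f.
          moor_algebra scaleA pr \<and> Vector_Spaces.linear scaleV scaleA f \<longrightarrow>
          (\<exists>!G. moor_morphism_from_ts scaleV scaleA pr G \<and> (\<forall>v. G (tsi v) = f v)))
     \<and> (\<forall>n\<ge>1. op_dim (R_Moor :: (tree \<Rightarrow>\<^sub>0 'k) set) n = n)
     \<and> Abs_fps (\<lambda>n. of_nat (op_dim (R_Moor :: (tree \<Rightarrow>\<^sub>0 'k) set) n) / fact n)
         = (fps_X * fps_exp 1 :: 'k fps)"
proof (intro conjI allI impI)
  show "koszul_dual_rel (R_NAP :: (tree \<Rightarrow>\<^sub>0 'k) set) = R_Moor" by (rule koszul)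
  show "is_free_moor_tensor_sym scaleV" by (rule free_moor_ts)
  fix scaleA :: "'k \<Rightarrow> 'a::ab_group_add \<Rightarrow> 'a" and pr f
  assume "moor_algebra scaleA pr \<and> Vector_Spaces.linear scaleV scaleA f"
  then show "\<exists>!G. moor_morphism_from_ts scaleV scaleA pr G \<and> (\<forall>v. G (tsi v) = f v)"
    by (rule mp[OF universal_property])
next
  fix n :: nat
  show "op_dim (R_Moor :: (tree \<Rightarrow>\<^sub>0 'k) set) n = n" by (rule op_dim_n)
next
  show "Abs_fps (\<lambda>n. of_nat (op_dim (R_Moor :: (tree \<Rightarrow>\<^sub>0 'k) set) n) / fact n)
         = (fps_X * fps_exp 1 :: 'k fps)" by (rule fps_part)
qed

end
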